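(* For the standard EA process, with $A_i=\mathrm{area}(C_i)$ and $D_i=\mathrm{diam}(C_i)$, for every $i\ge0$, \[D_i\le\sqrt{\frac{4A_i}{\pi}}+\sum_{j=0}^{i-1}\sqrt{\frac{2(A_{j+1}-A_j)}{\pi}}.\]
   Context: EA (excluded area) process: let $\mathbb{C}$ be the set of triples $(C,z,\tau)$ with $C\subset\mathbb{R}^2$ compact, $z\in C$, $0\le\tau<\infty$. Given $\mathbf c=(C,z,\tau)$, let $\mu_{\mathbf c}$ be the law of $(C',z',\tau')$ obtained as follows: take a Poisson point process $\tilde\Xi$ of intensity $e^{-\tau}$ on $\mathbb{R}^2\setminus C$, let $\xi$ be its point closest to $z$, and set $z'=\xi$, $C'=C\cup D(z,\|\xi-z\|)$ where $D(z,r)$ is the closed disc of center $z$ and radius $r$, and $\tau'=\tau+\theta$ with $\theta\sim$ Exponential(1) independent of $\tilde\Xi$. The EA process is the Markov chain $(C_i,Z_i,\tau_i)_{i\ge0}$ on $\mathbb{C}$ with transition kernel $\mathbf c\mapsto\mu_{\mathbf c}$. The standard EA process has initial state $(\{\mathbf 0\},\mathbf 0,\tau_0)$ with $\tau_0\sim$ Exponential(1), $\mathbf 0$ the origin. $\mathrm{area}$ is Lebesgue measure, $\mathrm{diam}(B)=\sup_{x,y\in B}\|x-y\|$. *)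

theory Defs
  imports "HOL-Probability.Probability"
begin

type_synonym point = "real^2"

definition pp_space :: "('a::euclidean_space) set measure" where
  "pp_space = sigma UNIV
     {{N. card (N \<inter> B) = k} | B k. B \<in> sets lborel \<and> bounded B}"

definition is_PPP :: "'p measure \<Rightarrow> ('p \<Rightarrow> ('a::euclidean_space) set) \<Rightarrow> 'a set \<Rightarrow> bool" where
  "is_PPP M N S \<longleftrightarrow>
     N \<in> measurable M pp_space \<and>
     (\<forall>\<omega>\<in>space M. N \<omega> \<subseteq> S \<and> (\<forall>B. bounded B \<longrightarrow> finite (N \<omega> \<inter> B))) \<and>
     (\<forall>B. B \<in> sets lborel \<and> bounded B \<longrightarrow>
        (\<forall>k::nat. measure M {\<omega>\<in>space M. card (N \<omega> \<inter> B) = k}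
           = exp (- measure lborel (B \<inter> S)) * measure lborel (B \<inter> S) ^ k / fact k)) \<and>
     (\<forall>(Bs :: nat \<Rightarrow> 'a set) n.
        (\<forall>i<n. Bs i \<in> sets lborel \<and> bounded (Bs i)) \<and> disjoint_family_on Bs {..<n} \<longrightarrow>
        prob_space.indep_vars M (\<lambda>_. count_space UNIV) (\<lambda>i \<omega>. card (N \<omega> \<inter> Bs i)) {..<n})"

text \<open>Point of X closest to z (a.s. unique and existing in the EA process).\<close>
definition nearest :: "point \<Rightarrow> point set \<Rightarrow> point" where
  "nearest z X = (SOME \<xi>. \<xi> \<in> X \<and> (\<forall>y\<in>X. dist z \<xi> \<le> dist z y))"

text \<open>Realisation of the standard EA process from driving noise:
  P i is a unit-intensity Poisson process on R^2 \<times> [0,\<infinity>) (marks), th 0 = tau_0,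
  th (Suc i) = theta used at step i.  The points (x,u) of P i with u \<le> exp(-tau_i)
  and x \<notin> C_i form a PPP of intensity exp(-tau_i) on R^2 - C_i.\<close>
primrec EA_path :: "(nat \<Rightarrow> (point \<times> real) set) \<Rightarrow> (nat \<Rightarrow> real) \<Rightarrow> nat
                      \<Rightarrow> point set \<times> point \<times> real" where
  "EA_path P th 0 = ({0}, 0, th 0)"
| "EA_path P th (Suc i) =
     (case EA_path P th i of (C, z, \<tau>) \<Rightarrow>
        let \<xi> = nearest z {x. \<exists>u. (x, u) \<in> P i \<and> u \<le> exp (- \<tau>) \<and> x \<notin> C}
        in (C \<union> cball z (dist z \<xi>), \<xi>, \<tau> + th (Suc i)))"

end

theory Submission
  imports Defs
begin

lemma half_disc:
  fixes c v :: point and t :: real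
  assumes v: "v \<noteq> 0" and t: "t \<ge> 0"
  shows "measure lborel {w. dist w c < t \<and> v \<bullet> (w - c) > 0} = pi * t^2 / 2"
proof -
  define Hp where "Hp = {w. dist w c < t \<and> v \<bullet> (w - c) > 0}"
  define Hm where "Hm = {w. dist w c < t \<and> v \<bullet> (w - c) < 0}"
  define L where "L = {w. dist w c < t \<and> v \<bullet> (w - c) = 0}"
  have oHp: "open Hp" unfolding Hp_def
    by (intro open_Collect_conj open_Collect_less continuous_intros)
  have oHm: "open Hm" unfolding Hm_def
    by (intro open_Collect_conj open_Collect_less continuous_intros)
  have bHp: "bounded Hp" unfolding Hp_def by (rule bounded_subset[OF bounded_ball[of c t]]) (auto simp: dist_commute)
  have bHm: "bounded Hm" unfolding Hm_def by (rule bounded_subset[OF bounded_ball[of c t]]) (auto simp: dist_commute)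
  have bL: "bounded L" unfolding L_def by (rule bounded_subset[OF bounded_ball[of c t]]) (auto simp: dist_commute)
  have negL: "negligible L"
    by (rule negligible_subset[OF negligible_hyperplane[of v "v \<bullet> c"]]) (use v in \<open>auto simp: L_def inner_diff_right\<close>)
  have mL: "L \<in> lmeasurable"
    using negL by (auto simp: fmeasurable_def negligible_iff_null_sets null_sets_def)
  have img: "Hm = (\<lambda>x. (-1) *\<^sub>R x + 2 *\<^sub>R c) ` Hp"
  proof (rule set_eqI, rule iffI)
    fix w assume "w \<in> Hm"
    have e: "2 *\<^sub>R c - w - c = -(w - c)" by (simp add: scaleR_2)
    have "dist (2 *\<^sub>R c - w) c = dist w c" unfolding dist_norm e by (simp add: norm_minus_commute)
    moreover have "v \<bullet> (2 *\<^sub>R c - w - c) = - (v \<bullet> (w - c))" unfolding e by (simp add: inner_diff_right)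
    ultimately have "2 *\<^sub>R c - w \<in> Hp" using \<open>w \<in> Hm\<close> by (auto simp: Hm_def Hp_def)
    moreover have "w = (-1) *\<^sub>R (2 *\<^sub>R c - w) + 2 *\<^sub>R c" by simp
    ultimately show "w \<in> (\<lambda>x. (-1) *\<^sub>R x + 2 *\<^sub>R c) ` Hp" by blast
  next
    fix w assume "w \<in> (\<lambda>x. (-1) *\<^sub>R x + 2 *\<^sub>R c) ` Hp"
    then obtain x where "x \<in> Hp" "w = (-1) *\<^sub>R x + 2 *\<^sub>R c" by blast
    then have x: "x \<in> Hp" and w: "w = 2 *\<^sub>R c - x" by auto
    have e: "w - c = -(x - c)" unfolding w by (simp add: scaleR_2)
    have "dist w c = dist x c" unfolding dist_norm e by (simp add: norm_minus_commute)
    moreover have "v \<bullet> (w - c) = - (v \<bullet> (x - c))" unfolding e by (simp add: inner_diff_right)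
    ultimately show "w \<in> Hm" using x by (auto simp: Hm_def Hp_def)
  qed
  have eq: "measure lebesgue Hm = measure lebesgue Hp"
    unfolding img using measure_lebesgue_affine[of "-1" "2 *\<^sub>R c" Hp] by simp
  have "measure lebesgue (ball c t) = measure lebesgue Hp + measure lebesgue Hm + measure lebesgue L"
    by (rule measure_Un3_negligible)
      (use lmeasurable_open[OF bHp oHp] lmeasurable_open[OF bHm oHm] mL negL in
        \<open>auto simp: Hp_def Hm_def L_def dist_commute intro: negligible_subset[OF negligible_empty]\<close>)
  moreover have "measure lebesgue L = 0" using negL negligible_imp_measure0 by blast
  moreover have "measure lebesgue (ball c t) = t^2 * pi"
    using circle_area[OF t, of c] by simp
  moreover have "measure lebesgue Hp = measure lborel Hp"
    using oHp by simp
  ultimately show ?thesis using eq unfolding Hp_def[symmetric] by (simp add: mult.commute)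
qed

lemma mono_area:
  fixes C :: "point set"
  assumes "compact C"
  shows "measure lborel C \<le> measure lborel (C \<union> cball z r)"
  by (rule measure_mono_fmeasurable) (use assms in \<open>auto intro!: fmeasurable_compact compact_Un borel_closed compact_imp_closed\<close>)

lemma disc_area:
  fixes C :: "point set"
  assumes "compact C" "r \<ge> 0"
  shows "pi * r^2 \<le> measure lborel (C \<union> cball z r)"
proof -
  have "measure lborel (cball z r) \<le> measure lborel (C \<union> cball z r)"
    by (rule measure_mono_fmeasurable) (use assms in \<open>auto intro!: fmeasurable_compact compact_Un\<close>)
  moreover have "measure lborel (cball z r) = pi * r^2"
    using circle_area[OF assms(2), of z] content_cball_conv_ball[of z r] by simp
  ultimately show ?thesis by simp
qed

lemma lune:
  fixes C :: "point set"
  assumes C: "compact C" and x: "x \<in> C" and z: "z \<in> C" and t: "t > 0"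
    and h: "dist x z + r \<ge> diameter C + t"
  shows "pi * t^2 / 2 \<le> measure lborel (C \<union> cball z r) - measure lborel C"
proof -
  define D where "D = diameter C"
  have bC: "bounded C" using C compact_imp_bounded by blast
  have xz: "dist x z \<le> D" unfolding D_def by (rule diameter_bounded_bound[OF bC x z])
  have D0: "D \<ge> 0" using xz zero_le_dist order_trans by blast
  have rt: "r \<ge> t" using h xz D_def by linarith
  define u :: point where "u = (if z = x then axis 1 1 else (1 / norm (z - x)) *\<^sub>R (z - x))"
  have nu: "norm u = 1" by (auto simp: u_def)
  have zx: "z - x = norm (z - x) *\<^sub>R u" by (auto simp: u_def)
  define c where "c = z + (r - t) *\<^sub>R u"
  define lam where "lam = norm (z - x) + (r - t)"
  have cx: "c - x = lam *\<^sub>R u"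
  proof -
    have "c - x = (z - x) + (r - t) *\<^sub>R u" by (simp add: c_def algebra_simps)
    also have "\<dots> = lam *\<^sub>R u" by (subst zx) (simp add: lam_def scaleR_add_left)
    finally show ?thesis .
  qed
  have lamD: "lam \<ge> D" using h by (simp add: lam_def dist_norm norm_minus_commute D_def)
  define H where "H = {w. dist w c < t \<and> u \<bullet> (w - c) > 0}"
  have Hball: "H \<subseteq> cball z r"
  proof
    fix w assume "w \<in> H"
    then have "dist w c < t" by (simp add: H_def)
    moreover have "dist c z = r - t" using rt by (simp add: c_def dist_norm nu)
    ultimately have "dist w z \<le> r" using dist_triangle[of w z c] by linarith
    then show "w \<in> cball z r" by (simp add: dist_commute)
  qed
  have HC: "H \<inter> C = {}"
  proof (rule ccontr)
    assume "H \<inter> C \<noteq> {}"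
    then obtain w where w: "w \<in> H" "w \<in> C" by blast
    have "dist x w \<le> D" unfolding D_def by (rule diameter_bounded_bound[OF bC x w(2)])
    moreover have "D^2 < (norm (w - x))^2"
    proof -
      have pos: "u \<bullet> (w - c) > 0" using w by (simp add: H_def)
      then have wc: "w - c \<noteq> 0" by auto
      have "w - x = (w - c) + lam *\<^sub>R u" using cx by (simp add: algebra_simps)
      have gen: "(norm (a + b))^2 = (norm a)^2 + 2 * (a \<bullet> b) + (norm b)^2" for a b :: point
        by (simp add: power2_norm_eq_inner inner_add_left inner_add_right inner_commute)
      have "(norm (w - x))^2 = (norm (w - c))^2 + 2 * ((w - c) \<bullet> (lam *\<^sub>R u)) + (norm (lam *\<^sub>R u))^2"
        unfolding \<open>w - x = (w - c) + lam *\<^sub>R u\<close> by (rule gen)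
      then have "(norm (w - x))^2 = (norm (w - c))^2 + 2 * lam * (u \<bullet> (w - c)) + lam^2 * (norm u)^2"
        by (simp add: inner_commute power_mult_distrib)
      then have e2: "(norm (w - x))^2 = (norm (w - c))^2 + 2 * lam * (u \<bullet> (w - c)) + lam^2"
        using nu by simp
      have n1: "(norm (w - c))^2 > 0" using wc by simp
      have n2: "lam * (u \<bullet> (w - c)) \<ge> 0" using pos lamD D0 by simp
      have n3: "D^2 \<le> lam^2" using lamD D0 by (simp add: power_mono)
      show ?thesis using e2 n1 n2 n3 by linarith
    qed
    ultimately show False using D0
      by (metis dist_norm norm_minus_commute norm_ge_zero power_mono not_le)
  qed
  have Hm: "measure lborel H = pi * t^2 / 2"
    unfolding H_def by (rule half_disc) (use nu t in auto)
  have oH: "open H" unfolding H_def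
    by (intro open_Collect_conj open_Collect_less continuous_intros)
  have fH: "H \<in> fmeasurable lborel"
    by (rule fmeasurableI2[OF fmeasurable_compact[OF compact_cball[of z r]] Hball]) (use oH in auto)
  have fC: "C \<in> fmeasurable lborel" using C fmeasurable_compact by blast
  have "measure lborel (C \<union> H) = measure lborel C + measure lborel H"
    by (rule measure_Union) (use fH fC HC in \<open>auto simp: fmeasurable_def\<close>)
  moreover have "measure lborel (C \<union> H) \<le> measure lborel (C \<union> cball z r)"
  proof (rule measure_mono_fmeasurable)
    show "C \<union> H \<subseteq> C \<union> cball z r" using Hball by blast
    show "C \<union> H \<in> sets lborel" using fH fC by (auto simp: fmeasurable_def)
    show "C \<union> cball z r \<in> fmeasurable lborel" using C by (intro fmeasurable_compact compact_Un) auto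
  qed
  ultimately show ?thesis using Hm by simp
qed

lemma step:
  fixes C :: "point set"
  assumes C: "compact C" and ne: "C \<noteq> {}" and z: "z \<in> C" and r: "r \<ge> 0"
  shows "diameter (C \<union> cball z r) \<le> max (diameter C + sqrt (2 * (measure lborel (C \<union> cball z r) - measure lborel C) / pi)) (2 * r)"
proof -
  define \<Delta> where "\<Delta> = measure lborel (C \<union> cball z r) - measure lborel C"
  have d0: "\<Delta> \<ge> 0" using mono_area[OF C, of z r] by (simp add: \<Delta>_def)
  have bC: "bounded C" using C compact_imp_bounded by blast
  have K: "compact (C \<union> cball z r)" using C by auto
  obtain p q where pq: "p \<in> C \<union> cball z r" "q \<in> C \<union> cball z r" "dist p q = diameter (C \<union> cball z r)"
    using diameter_compact_attained[OF K] z by blast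
  have mixed: "dist a b \<le> diameter C + sqrt (2 * \<Delta> / pi)" if a: "a \<in> C" and b: "b \<in> cball z r" for a b
  proof (cases "dist a b \<le> diameter C")
    case True then show ?thesis using d0 by (smt (verit) real_sqrt_ge_zero divide_nonneg_pos pi_gt_zero)
  next
    case False
    define t where "t = dist a b - diameter C"
    have t: "t > 0" using False by (simp add: t_def)
    have "dist a b \<le> dist a z + dist z b" by (rule dist_triangle)
    also have "dist z b \<le> r" using b by simp
    finally have "dist a z + r \<ge> diameter C + t" by (simp add: t_def)
    from lune[OF C a z t this] have "pi * t^2 / 2 \<le> \<Delta>" by (simp add: \<Delta>_def)
    then have "t^2 \<le> 2 * \<Delta> / pi" by (simp add: field_simps)
    then have "sqrt (t^2) \<le> sqrt (2 * \<Delta> / pi)" using real_sqrt_le_mono by blast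
    then have "t \<le> sqrt (2 * \<Delta> / pi)" using t by simp
    then show ?thesis by (simp add: t_def)
  qed
  have "dist p q \<le> max (diameter C + sqrt (2 * \<Delta> / pi)) (2 * r)"
  proof -
    consider "p \<in> C" "q \<in> C" | "p \<in> C" "q \<in> cball z r" | "p \<in> cball z r" "q \<in> C"
      | "p \<in> cball z r" "q \<in> cball z r" using pq by blast
    then show ?thesis
    proof cases
      case 1
      then have "dist p q \<le> diameter C" using diameter_bounded_bound[OF bC] by blast
      then show ?thesis using d0 by (smt (verit) real_sqrt_ge_zero divide_nonneg_pos pi_gt_zero)
    next
      case 2 then show ?thesis using mixed by fastforce
    next
      case 3 then show ?thesis using mixed[of q p] by (simp add: dist_commute)
    next
      case 4
      then have "dist p q \<le> dist p z + dist z q" using dist_triangle by blast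
      then show ?thesis using 4 by (simp add: dist_commute)
    qed
  qed
  then show ?thesis using pq by (simp add: \<Delta>_def)
qed

lemma EA_Suc_fst:
  "fst (EA_path P th (Suc i)) = fst (EA_path P th i) \<union>
     cball (fst (snd (EA_path P th i))) (dist (fst (snd (EA_path P th i))) (fst (snd (EA_path P th (Suc i)))))"
  by (cases "EA_path P th i") (simp add: Let_def)

lemma EA_inv:
  "compact (fst (EA_path P th i)) \<and> fst (snd (EA_path P th i)) \<in> fst (EA_path P th i)"
proof (induction i)
  case 0 then show ?case by simp
next
  case (Suc i)
  have "fst (snd (EA_path P th (Suc i))) \<in> cball (fst (snd (EA_path P th i))) (dist (fst (snd (EA_path P th i))) (fst (snd (EA_path P th (Suc i)))))"
    by simp
  then show ?case using Suc unfolding EA_Suc_fst by auto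
qed

lemma EA_bound:
  fixes P :: "nat \<Rightarrow> (point \<times> real) set" and th :: "nat \<Rightarrow> real"
  defines "C \<equiv> (\<lambda>j. fst (EA_path P th j))"
  defines "A \<equiv> (\<lambda>j. measure lborel (C j))"
  shows "diameter (C i) \<le> sqrt (4 * A i / pi) + (\<Sum>j<i. sqrt (2 * (A (Suc j) - A j) / pi))"
proof -
  have mAll: "A j \<le> A (Suc j)" for j
  proof -
    have "C (Suc j) = C j \<union> cball (fst (snd (EA_path P th j))) (dist (fst (snd (EA_path P th j))) (fst (snd (EA_path P th (Suc j)))))"
      unfolding C_def by (rule EA_Suc_fst)
    moreover have "compact (C j)" using EA_inv unfolding C_def by auto
    ultimately show ?thesis unfolding A_def using mono_area by metis
  qed
  show ?thesis
proof (induction i)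
  case 0
  then show ?case by (simp add: C_def A_def)
next
  case (Suc i)
  define z where "z = fst (snd (EA_path P th i))"
  define r where "r = dist (fst (snd (EA_path P th i))) (fst (snd (EA_path P th (Suc i))))"
  have CS: "C (Suc i) = C i \<union> cball z r" unfolding C_def z_def r_def by (rule EA_Suc_fst)
  have cC: "compact (C i)" and zC: "z \<in> C i" using EA_inv unfolding C_def z_def by auto
  have r0: "r \<ge> 0" by (simp add: r_def)
  define s where "s = sqrt (2 * (A (Suc i) - A i) / pi)"
  have st: "diameter (C (Suc i)) \<le> max (diameter (C i) + s) (2 * r)"
    using step[OF cC _ zC r0] zC unfolding CS s_def A_def CS by auto
  have mA: "A i \<le> A (Suc i)" unfolding A_def CS by (rule mono_area[OF cC])
  have pA: "pi * r^2 \<le> A (Suc i)" unfolding A_def CS by (rule disc_area[OF cC r0])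
  have sq: "sqrt (4 * A i / pi) \<le> sqrt (4 * A (Suc i) / pi)"
    using mA by (simp add: divide_right_mono)
  have "2 * r = sqrt (4 * (pi * r^2) / pi)"
    using r0 by (simp add: real_sqrt_mult)
  also have "\<dots> \<le> sqrt (4 * A (Suc i) / pi)"
    using pA by (intro real_sqrt_le_mono divide_right_mono) auto
  finally have r2: "2 * r \<le> sqrt (4 * A (Suc i) / pi)" .
  have sum0: "(\<Sum>j<Suc i. sqrt (2 * (A (Suc j) - A j) / pi)) \<ge> 0"
    by (rule sum_nonneg) (use mAll in simp)
  have sumS: "(\<Sum>j<Suc i. sqrt (2 * (A (Suc j) - A j) / pi)) = (\<Sum>j<i. sqrt (2 * (A (Suc j) - A j) / pi)) + s"
    by (simp add: s_def)
  show ?case using st Suc sq r2 sum0 sumS by linarith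
qed
qed

theorem lemma5:
  fixes M :: "'p measure"
    and P :: "nat \<Rightarrow> 'p \<Rightarrow> (point \<times> real) set"
    and th :: "nat \<Rightarrow> 'p \<Rightarrow> real"
  assumes "prob_space M"
    and "\<forall>i. is_PPP M (P i) (UNIV \<times> {0..})"
    and "\<forall>i. distributed M lborel (th i) (exponential_density 1)"
    and "prob_space.indep_vars M (\<lambda>_. pp_space \<Otimes>\<^sub>M borel)
           (\<lambda>k \<omega>. case k of Inl i \<Rightarrow> (P i \<omega>, 0)
                           | Inr j \<Rightarrow> ({}, th j \<omega>)) (UNIV :: (nat + nat) set)"
  shows "AE \<omega> in M. \<forall>i::nat.
           (let C = (\<lambda>j. fst (EA_path (\<lambda>j. P j \<omega>) (\<lambda>j. th j \<omega>) j));
                A = (\<lambda>j. measure lborel (C j))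
            in diameter (C i) \<le> sqrt (4 * A i / pi)
                 + (\<Sum>j<i. sqrt (2 * (A (Suc j) - A j) / pi)))"
proof (rule AE_I2, intro allI)
  fix \<omega> i
  show "let C = (\<lambda>j. fst (EA_path (\<lambda>j. P j \<omega>) (\<lambda>j. th j \<omega>) j));
                A = (\<lambda>j. measure lborel (C j))
            in diameter (C i) \<le> sqrt (4 * A i / pi)
                 + (\<Sum>j<i. sqrt (2 * (A (Suc j) - A j) / pi))"
    unfolding Let_def by (rule EA_bound)
qed

end
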